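(* Let $G$ be an ST graph. An arc $v\to w$ of $G$ is disimplicial in $G$ if and only if $\mathrm{repr}(v)\to\mathrm{repr}(w)$ is disimplicial in $\mathrm{Repr}(G)$.
   Context: A digraph $G$ is a finite set $V(G)$ with $E(G)\subseteq V(G)\times V(G)$. $N^+(v)$, $N^-(v)$ are the out- and in-neighborhoods and $N(v)=N^+(v)\cup N^-(v)$. A source has $N^-(v)=\emptyset$, a sink has $N^+(v)=\emptyset$; $G$ is an ST graph if every vertex is a source or a sink. An arc $v\to w$ is disimplicial if $x\to y$ is an arc for all $x\in N^-(w)$, $y\in N^+(v)$. Two vertices $v,w$ of an ST graph are twins when $N(v)=N(w)$; a twin block is a maximal set of pairwise twin vertices (the blocks partition $V(G)$). A function $\mathrm{repr}$ selects one vertex $\mathrm{repr}(B)\in B$ of each block $B$, and $\mathrm{repr}(v)=\mathrm{repr}(B)$ for $v\in B$. The twin reduction $\mathrm{Repr}(G)$ is the subdigraph of $G$ induced by $\{\mathrm{repr}(B): B \text{ a twin block}\}$. *)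

theory Defs
  imports Main
begin

definition digraph :: "'a set \<Rightarrow> ('a \<times> 'a) set \<Rightarrow> bool" where
  "digraph V E \<longleftrightarrow> finite V \<and> E \<subseteq> V \<times> V"

definition out_nbhd :: "('a \<times> 'a) set \<Rightarrow> 'a \<Rightarrow> 'a set" where
  "out_nbhd E v = {w. (v, w) \<in> E}"

definition in_nbhd :: "('a \<times> 'a) set \<Rightarrow> 'a \<Rightarrow> 'a set" where
  "in_nbhd E v = {u. (u, v) \<in> E}"

definition nbhd :: "('a \<times> 'a) set \<Rightarrow> 'a \<Rightarrow> 'a set" where
  "nbhd E v = out_nbhd E v \<union> in_nbhd E v"

definition is_source :: "('a \<times> 'a) set \<Rightarrow> 'a \<Rightarrow> bool" where
  "is_source E v \<longleftrightarrow> in_nbhd E v = {}"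

definition is_sink :: "('a \<times> 'a) set \<Rightarrow> 'a \<Rightarrow> bool" where
  "is_sink E v \<longleftrightarrow> out_nbhd E v = {}"

definition ST_graph :: "'a set \<Rightarrow> ('a \<times> 'a) set \<Rightarrow> bool" where
  "ST_graph V E \<longleftrightarrow> digraph V E \<and> (\<forall>v\<in>V. is_source E v \<or> is_sink E v)"

definition disimplicial :: "('a \<times> 'a) set \<Rightarrow> 'a \<Rightarrow> 'a \<Rightarrow> bool" where
  "disimplicial E v w \<longleftrightarrow> (v, w) \<in> E \<and>
     (\<forall>x\<in>in_nbhd E w. \<forall>y\<in>out_nbhd E v. (x, y) \<in> E)"

definition twins :: "('a \<times> 'a) set \<Rightarrow> 'a \<Rightarrow> 'a \<Rightarrow> bool" where
  "twins E v w \<longleftrightarrow> nbhd E v = nbhd E w"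

definition twin_block :: "'a set \<Rightarrow> ('a \<times> 'a) set \<Rightarrow> 'a set \<Rightarrow> bool" where
  "twin_block V E B \<longleftrightarrow> B \<subseteq> V \<and> B \<noteq> {} \<and> (\<forall>v\<in>B. \<forall>w\<in>B. twins E v w) \<and>
     (\<forall>B'. B \<subseteq> B' \<and> B' \<subseteq> V \<and> (\<forall>v\<in>B'. \<forall>w\<in>B'. twins E v w) \<longrightarrow> B' = B)"

definition is_repr :: "'a set \<Rightarrow> ('a \<times> 'a) set \<Rightarrow> ('a \<Rightarrow> 'a) \<Rightarrow> bool" where
  "is_repr V E r \<longleftrightarrow> (\<forall>B. twin_block V E B \<longrightarrow> (\<exists>x\<in>B. \<forall>v\<in>B. r v = x))"

definition Repr_V :: "'a set \<Rightarrow> ('a \<Rightarrow> 'a) \<Rightarrow> 'a set" where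
  "Repr_V V r = r ` V"

definition Repr_E :: "'a set \<Rightarrow> ('a \<times> 'a) set \<Rightarrow> ('a \<Rightarrow> 'a) \<Rightarrow> ('a \<times> 'a) set" where
  "Repr_E V E r = E \<inter> (r ` V \<times> r ` V)"

end

theory Submission
  imports Defs
begin

lemma repr_twin:
  assumes "is_repr V E r" "v \<in> V"
  shows "twins E v (r v) \<and> r v \<in> V"
proof -
  let ?B = "{u\<in>V. twins E v u}"
  have "twin_block V E ?B"
    unfolding twin_block_def
  proof (intro conjI allI impI)
    show "?B \<subseteq> V" by blast
    show "?B \<noteq> {}" using assms(2) by (auto simp: twins_def)
    show "\<forall>a\<in>?B. \<forall>b\<in>?B. twins E a b" by (simp add: twins_def)
    fix B' assume h: "?B \<subseteq> B' \<and> B' \<subseteq> V \<and> (\<forall>a\<in>B'. \<forall>b\<in>B'. twins E a b)"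
    have "v \<in> B'" using h assms(2) by (auto simp: twins_def)
    hence "B' \<subseteq> ?B" using h by blast
    thus "B' = ?B" using h by blast
  qed
  then obtain x where "x \<in> ?B" "\<forall>u\<in>?B. r u = x"
    using assms(1) unfolding is_repr_def by blast
  moreover have "v \<in> ?B" using assms(2) by (simp add: twins_def)
  ultimately show ?thesis by auto
qed

lemma out_twin:
  assumes st: "ST_graph V E" and ab: "(a, b) \<in> E" and tw: "twins E a a'" and a'V: "a' \<in> V"
  shows "out_nbhd E a' = out_nbhd E a"
proof -
  have bs: "is_sink E b \<or> is_source E b" using st ab unfolding ST_graph_def digraph_def by auto
  have "\<not> is_source E b" using ab by (auto simp: is_source_def in_nbhd_def)
  hence bsink: "is_sink E b" using bs by blast
  have "b \<in> nbhd E a'" using tw ab by (auto simp: twins_def nbhd_def out_nbhd_def)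
  hence "(a', b) \<in> E \<or> (b, a') \<in> E" by (auto simp: nbhd_def out_nbhd_def in_nbhd_def)
  hence "(a', b) \<in> E" using bsink by (auto simp: is_sink_def out_nbhd_def)
  hence "is_source E a'" using st a'V unfolding ST_graph_def by (auto simp: is_sink_def out_nbhd_def)
  moreover have "is_source E a" using st ab unfolding ST_graph_def digraph_def
    by (auto simp: is_sink_def out_nbhd_def)
  ultimately show ?thesis using tw by (auto simp: twins_def nbhd_def is_source_def)
qed

lemma in_twin:
  assumes st: "ST_graph V E" and ab: "(a, b) \<in> E" and tw: "twins E b b'" and b'V: "b' \<in> V"
  shows "in_nbhd E b' = in_nbhd E b"
proof -
  have as: "is_sink E a \<or> is_source E a" using st ab unfolding ST_graph_def digraph_def by auto
  have "\<not> is_sink E a" using ab by (auto simp: is_sink_def out_nbhd_def)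
  hence asrc: "is_source E a" using as by blast
  have "a \<in> nbhd E b'" using tw ab by (auto simp: twins_def nbhd_def in_nbhd_def)
  hence "(a, b') \<in> E \<or> (b', a) \<in> E" by (auto simp: nbhd_def out_nbhd_def in_nbhd_def)
  hence "(a, b') \<in> E" using asrc by (auto simp: is_source_def in_nbhd_def)
  hence "is_sink E b'" using st b'V unfolding ST_graph_def by (auto simp: is_source_def in_nbhd_def)
  moreover have "is_sink E b" using st ab unfolding ST_graph_def digraph_def
    by (auto simp: is_source_def in_nbhd_def)
  ultimately show ?thesis using tw by (auto simp: twins_def nbhd_def is_sink_def)
qed

theorem proposition7:
  fixes V :: "'a set" and E :: "('a \<times> 'a) set" and r :: "'a \<Rightarrow> 'a"
  assumes "ST_graph V E"
    and "is_repr V E r"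
    and "(v, w) \<in> E"
  shows "disimplicial E v w \<longleftrightarrow> disimplicial (Repr_E V E r) (r v) (r w)"
proof -
  have EV: "E \<subseteq> V \<times> V" using assms(1) by (simp add: ST_graph_def digraph_def)
  have R: "\<And>u. u \<in> V \<Longrightarrow> twins E u (r u) \<and> r u \<in> V" using repr_twin[OF assms(2)] .
  have vV: "v \<in> V" and wV: "w \<in> V" using EV assms(3) by auto
  have ov: "out_nbhd E (r v) = out_nbhd E v" using out_twin[OF assms(1) assms(3) conjunct1[OF R[OF vV]] conjunct2[OF R[OF vV]]] .
  have iw: "in_nbhd E (r w) = in_nbhd E w" using in_twin[OF assms(1) assms(3) conjunct1[OF R[OF wV]] conjunct2[OF R[OF wV]]] .
  have rvw: "(r v, r w) \<in> E"
  proof -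
    have "w \<in> out_nbhd E (r v)" using ov assms(3) by (simp add: out_nbhd_def)
    hence "r v \<in> in_nbhd E w" by (simp add: out_nbhd_def in_nbhd_def)
    hence "r v \<in> in_nbhd E (r w)" using iw by simp
    thus ?thesis by (simp add: in_nbhd_def)
  qed
  have rvwE': "(r v, r w) \<in> Repr_E V E r" using rvw vV wV by (simp add: Repr_E_def)
  show ?thesis
  proof
    assume d: "disimplicial E v w"
    show "disimplicial (Repr_E V E r) (r v) (r w)" unfolding disimplicial_def
    proof (intro conjI ballI)
      show "(r v, r w) \<in> Repr_E V E r" by fact
      fix x y assume x: "x \<in> in_nbhd (Repr_E V E r) (r w)" and y: "y \<in> out_nbhd (Repr_E V E r) (r v)"
      have x1: "(x, r w) \<in> E" and x2: "x \<in> r ` V" using x by (auto simp: in_nbhd_def Repr_E_def)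
      have y1: "(r v, y) \<in> E" and y2: "y \<in> r ` V" using y by (auto simp: out_nbhd_def Repr_E_def)
      have "x \<in> in_nbhd E (r w)" using x1 by (simp add: in_nbhd_def)
      hence "x \<in> in_nbhd E w" using iw by simp
      moreover have "y \<in> out_nbhd E (r v)" using y1 by (simp add: out_nbhd_def)
      hence "y \<in> out_nbhd E v" using ov by simp
      ultimately have "(x, y) \<in> E" using d by (simp add: disimplicial_def)
      thus "(x, y) \<in> Repr_E V E r" using x2 y2 by (simp add: Repr_E_def)
    qed
  next
    assume d: "disimplicial (Repr_E V E r) (r v) (r w)"
    show "disimplicial E v w" unfolding disimplicial_def
    proof (intro conjI ballI)
      show "(v, w) \<in> E" by fact
      fix x y assume x: "x \<in> in_nbhd E w" and y: "y \<in> out_nbhd E v"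
      have xw: "(x, w) \<in> E" and vy: "(v, y) \<in> E" using x y by (auto simp: in_nbhd_def out_nbhd_def)
      have xV: "x \<in> V" and yV: "y \<in> V" using EV xw vy by auto
      have ox: "out_nbhd E (r x) = out_nbhd E x" using out_twin[OF assms(1) xw conjunct1[OF R[OF xV]] conjunct2[OF R[OF xV]]] .
      have iy: "in_nbhd E (r y) = in_nbhd E y" using in_twin[OF assms(1) vy conjunct1[OF R[OF yV]] conjunct2[OF R[OF yV]]] .
      have "w \<in> out_nbhd E x" using xw by (simp add: out_nbhd_def)
      hence "w \<in> out_nbhd E (r x)" using ox by simp
      hence "(r x, w) \<in> E" by (simp add: out_nbhd_def)
      hence "r x \<in> in_nbhd E w" by (simp add: in_nbhd_def)
      hence "r x \<in> in_nbhd E (r w)" using iw by simp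
      hence "(r x, r w) \<in> E" by (simp add: in_nbhd_def)
      hence "r x \<in> in_nbhd (Repr_E V E r) (r w)" using xV wV
        by (simp add: in_nbhd_def Repr_E_def)
      moreover have "v \<in> in_nbhd E y" using vy by (simp add: in_nbhd_def)
      hence "v \<in> in_nbhd E (r y)" using iy by simp
      hence "(v, r y) \<in> E" by (simp add: in_nbhd_def)
      hence "r y \<in> out_nbhd E v" by (simp add: out_nbhd_def)
      hence "r y \<in> out_nbhd E (r v)" using ov by simp
      hence "(r v, r y) \<in> E" by (simp add: out_nbhd_def)
      hence "r y \<in> out_nbhd (Repr_E V E r) (r v)" using yV vV
        by (simp add: out_nbhd_def Repr_E_def)
      ultimately have "(r x, r y) \<in> Repr_E V E r" using d unfolding disimplicial_def by blast
      hence "r y \<in> out_nbhd E (r x)" by (simp add: Repr_E_def out_nbhd_def)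
      hence "r y \<in> out_nbhd E x" using ox by simp
      hence "x \<in> in_nbhd E (r y)" by (simp add: in_nbhd_def out_nbhd_def)
      hence "x \<in> in_nbhd E y" using iy by simp
      thus "(x, y) \<in> E" by (simp add: in_nbhd_def)
    qed
  qed
qed

end
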